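(* Let $A_1,B_1,A_2,B_2$ be groups with $A_1\cap B_1=A_2\cap B_2=\{1\}$. If $\mathcal{F}(A_1)\equiv\mathcal{F}(A_2)$ and $\mathcal{F}(B_1)\equiv\mathcal{F}(B_2)$ (with respect to the language of groups), then the free products $A_1*B_1$ and $A_2*B_2$ are existentially equivalent in the language of groups.
   Context: The language of groups has a constant $1$, a binary function $\cdot$ and a unary function $^{-1}$. For structures $\mathcal{M},\mathcal{N}$ in a language $\mathcal{L}$, an $\mathcal{L}$-isomorphism between subsets $S\subseteq M$, $T\subseteq N$ is a bijection $\phi:S\to T$ such that $\phi$ and $\phi^{-1}$ preserve constants lying in the set, preserve relations on tuples from the set, and satisfy $\phi(f(s_1,\dots,s_n))=f(\phi(s_1),\dots,\phi(s_n))$ whenever $s_i\in S$ and $f(s_1,\dots,s_n)\in S$ (and symmetrically for $\phi^{-1}$). $\mathcal{F}(\mathcal{M})\equiv\mathcal{F}(\mathcal{N})$ means that there is a bijection $\theta$ between the sets of $\mathcal{L}$-isomorphism classes of finite subsets of $M$ and of $N$ with $S\cong_\mathcal{L}T$ whenever $\theta([S])=[T]$; equivalently every finite subset of either structure is $\mathcal{L}$-isomorphic to a finite subset of the other. Existential equivalence means satisfying the same existential sentences. *)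

theory Defs
  imports "HOL-Algebra.Group"
begin

datatype gterm = GVar nat | GOne | GMul gterm gterm | GInv gterm

datatype gqf = GEq gterm gterm | GNeg gqf | GConj gqf gqf | GDisj gqf gqf

fun geval :: "('c, 'z) monoid_scheme \<Rightarrow> (nat \<Rightarrow> 'c) \<Rightarrow> gterm \<Rightarrow> 'c" where
  "geval G \<rho> (GVar n) = \<rho> n"
| "geval G \<rho> GOne = \<one>\<^bsub>G\<^esub>"
| "geval G \<rho> (GMul s t) = geval G \<rho> s \<otimes>\<^bsub>G\<^esub> geval G \<rho> t"
| "geval G \<rho> (GInv t) = inv\<^bsub>G\<^esub> (geval G \<rho> t)"

fun gsat :: "('c, 'z) monoid_scheme \<Rightarrow> (nat \<Rightarrow> 'c) \<Rightarrow> gqf \<Rightarrow> bool" where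
  "gsat G \<rho> (GEq s t) = (geval G \<rho> s = geval G \<rho> t)"
| "gsat G \<rho> (GNeg \<phi>) = (\<not> gsat G \<rho> \<phi>)"
| "gsat G \<rho> (GConj \<phi> \<psi>) = (gsat G \<rho> \<phi> \<and> gsat G \<rho> \<psi>)"
| "gsat G \<rho> (GDisj \<phi> \<psi>) = (gsat G \<rho> \<phi> \<or> gsat G \<rho> \<psi>)"

text \<open>An existential sentence is \<open>\<exists>x1 ... xn. \<phi>\<close> with \<open>\<phi>\<close> quantifier-free and all
  variables of \<open>\<phi>\<close> among the bound ones; it holds iff some assignment of the
  variables to elements of the carrier satisfies \<open>\<phi>\<close>.\<close>

definition ex_holds :: "('c, 'z) monoid_scheme \<Rightarrow> gqf \<Rightarrow> bool" where
  "ex_holds G \<phi> \<longleftrightarrow> (\<exists>\<rho>. (\<forall>n. \<rho> n \<in> carrier G) \<and> gsat G \<rho> \<phi>)"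

definition existentially_equivalent ::
  "('c, 'z) monoid_scheme \<Rightarrow> ('d, 'y) monoid_scheme \<Rightarrow> bool" where
  "existentially_equivalent G H \<longleftrightarrow> (\<forall>\<phi>. ex_holds G \<phi> \<longleftrightarrow> ex_holds H \<phi>)"

definition preserves_on ::
  "('c, 'z) monoid_scheme \<Rightarrow> ('d, 'y) monoid_scheme \<Rightarrow> 'c set \<Rightarrow> ('c \<Rightarrow> 'd) \<Rightarrow> bool" where
  "preserves_on G H S f \<longleftrightarrow>
     (\<one>\<^bsub>G\<^esub> \<in> S \<longrightarrow> f \<one>\<^bsub>G\<^esub> = \<one>\<^bsub>H\<^esub>) \<and>
     (\<forall>x\<in>S. \<forall>y\<in>S. x \<otimes>\<^bsub>G\<^esub> y \<in> S \<longrightarrow> f (x \<otimes>\<^bsub>G\<^esub> y) = f x \<otimes>\<^bsub>H\<^esub> f y) \<and>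
     (\<forall>x\<in>S. inv\<^bsub>G\<^esub> x \<in> S \<longrightarrow> f (inv\<^bsub>G\<^esub> x) = inv\<^bsub>H\<^esub> (f x))"

definition partial_iso ::
  "('c, 'z) monoid_scheme \<Rightarrow> ('d, 'y) monoid_scheme \<Rightarrow> 'c set \<Rightarrow> 'd set \<Rightarrow> ('c \<Rightarrow> 'd) \<Rightarrow> bool" where
  "partial_iso G H S T f \<longleftrightarrow>
     S \<subseteq> carrier G \<and> T \<subseteq> carrier H \<and> bij_betw f S T \<and>
     preserves_on G H S f \<and> preserves_on H G T (inv_into S f)"

definition fin_equiv :: "('c, 'z) monoid_scheme \<Rightarrow> ('d, 'y) monoid_scheme \<Rightarrow> bool" where
  "fin_equiv G H \<longleftrightarrow>
     (\<forall>S. S \<subseteq> carrier G \<and> finite S \<longrightarrow> (\<exists>T f. partial_iso G H S T f)) \<and>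
     (\<forall>T. T \<subseteq> carrier H \<and> finite T \<longrightarrow> (\<exists>S g. partial_iso H G T S g))"

definition same_factor :: "'a monoid \<Rightarrow> 'a monoid \<Rightarrow> 'a \<Rightarrow> 'a \<Rightarrow> bool" where
  "same_factor A B x y \<longleftrightarrow>
     (x \<in> carrier A \<and> y \<in> carrier A) \<or> (x \<in> carrier B \<and> y \<in> carrier B)"

definition reduced_word :: "'a monoid \<Rightarrow> 'a monoid \<Rightarrow> 'a list \<Rightarrow> bool" where
  "reduced_word A B w \<longleftrightarrow>
     set w \<subseteq> (carrier A \<union> carrier B) - {\<one>\<^bsub>A\<^esub>} \<and>
     successively (\<lambda>x y. \<not> same_factor A B x y) w"

definition fp_cons :: "'a monoid \<Rightarrow> 'a monoid \<Rightarrow> 'a \<Rightarrow> 'a list \<Rightarrow> 'a list" where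
  "fp_cons A B x w =
     (if x = \<one>\<^bsub>A\<^esub> then w
      else (case w of
              [] \<Rightarrow> [x]
            | y # w' \<Rightarrow>
                if x \<in> carrier A \<and> y \<in> carrier A then
                  (let z = x \<otimes>\<^bsub>A\<^esub> y in if z = \<one>\<^bsub>A\<^esub> then w' else z # w')
                else if x \<in> carrier B \<and> y \<in> carrier B then
                  (let z = x \<otimes>\<^bsub>B\<^esub> y in if z = \<one>\<^bsub>B\<^esub> then w' else z # w')
                else x # w))"

definition free_product :: "'a monoid \<Rightarrow> 'a monoid \<Rightarrow> 'a list monoid" where
  "free_product A B =
     \<lparr> carrier = {w. reduced_word A B w},
       mult = (\<lambda>u v. foldr (fp_cons A B) u v),
       one = [] \<rparr>"

end

theory Submission
  imports Defs
begin

lemma reduced_Nil[simp]: "reduced_word A B []"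
  by (simp add: reduced_word_def)

lemma reduced_Cons: "reduced_word A B (x # w) \<longleftrightarrow>
   x \<in> (carrier A \<union> carrier B) - {\<one>\<^bsub>A\<^esub>} \<and> reduced_word A B w \<and>
   (w = [] \<or> \<not> same_factor A B x (hd w))"
  by (cases w) (auto simp: reduced_word_def)

locale fp2 = A: group A + B: group B for A B :: "'a monoid" +
  assumes one_eq: "\<one>\<^bsub>B\<^esub> = \<one>\<^bsub>A\<^esub>"
    and inter: "carrier A \<inter> carrier B = {\<one>\<^bsub>A\<^esub>}"
begin

lemma gA: "group A" and gB: "group B" by unfold_locales

lemma AB1: "x \<in> carrier A \<Longrightarrow> x \<in> carrier B \<Longrightarrow> x = \<one>\<^bsub>A\<^esub>"
  using inter by blast

lemma fp_cons_reduced: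
  assumes x: "x \<in> carrier A \<union> carrier B" and w: "reduced_word A B w"
  shows "reduced_word A B (fp_cons A B x w)"
proof (cases "x = \<one>\<^bsub>A\<^esub>")
  case True thus ?thesis using w by (simp add: fp_cons_def)
next
  case x1: False
  show ?thesis
  proof (cases w)
    case Nil thus ?thesis using x x1 by (simp add: fp_cons_def reduced_Cons)
  next
    case (Cons y w')
    have y: "y \<in> (carrier A \<union> carrier B) - {\<one>\<^bsub>A\<^esub>}" and w': "reduced_word A B w'"
      and yw': "w' = [] \<or> \<not> same_factor A B y (hd w')"
      using w Cons by (auto simp: reduced_Cons)
    have hw': "w' \<noteq> [] \<Longrightarrow> hd w' \<in> (carrier A \<union> carrier B) - {\<one>\<^bsub>A\<^esub>}"
      using w' by (cases w') (auto simp: reduced_Cons)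
    show ?thesis
    proof (cases "x \<in> carrier A \<and> y \<in> carrier A")
      case True
      have z: "x \<otimes>\<^bsub>A\<^esub> y \<in> carrier A" using True group.subgroup_self[OF gA]
        by (simp add: monoid.m_closed[OF group.is_monoid[OF gA]])
      have "w' = [] \<or> \<not> same_factor A B (x \<otimes>\<^bsub>A\<^esub> y) (hd w')" if "x \<otimes>\<^bsub>A\<^esub> y \<noteq> \<one>\<^bsub>A\<^esub>"
        using yw' hw' True z that AB1 y by (auto simp: same_factor_def)
      thus ?thesis using True z w' Cons x1
        by (auto simp: fp_cons_def Let_def reduced_Cons)
    next
      case nA: False
      show ?thesis
      proof (cases "x \<in> carrier B \<and> y \<in> carrier B")
        case True
        have z: "x \<otimes>\<^bsub>B\<^esub> y \<in> carrier B" using True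
          by (simp add: monoid.m_closed[OF group.is_monoid[OF gB]])
        have "w' = [] \<or> \<not> same_factor A B (x \<otimes>\<^bsub>B\<^esub> y) (hd w')" if "x \<otimes>\<^bsub>B\<^esub> y \<noteq> \<one>\<^bsub>A\<^esub>"
          using yw' hw' True z that AB1 y by (auto simp: same_factor_def)
        thus ?thesis using True z w' Cons x1 nA one_eq
          by (auto simp: fp_cons_def Let_def reduced_Cons)
      next
        case False
        thus ?thesis using nA w Cons x x1 by (auto simp: fp_cons_def reduced_Cons same_factor_def)
      qed
    qed
  qed
qed

lemma foldr_reduced:
  "set u \<subseteq> carrier A \<union> carrier B \<Longrightarrow> reduced_word A B v \<Longrightarrow> reduced_word A B (foldr (fp_cons A B) u v)"
  by (induction u) (auto intro: fp_cons_reduced)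

lemma reduced_set: "reduced_word A B w \<Longrightarrow> set w \<subseteq> carrier A \<union> carrier B"
  by (auto simp: reduced_word_def)

lemma mult_closed: "reduced_word A B u \<Longrightarrow> reduced_word A B v \<Longrightarrow> reduced_word A B (u \<otimes>\<^bsub>free_product A B\<^esub> v)"
  by (simp add: free_product_def foldr_reduced reduced_set)


definition letinv :: "'a \<Rightarrow> 'a" where
  "letinv x = (if x \<in> carrier A then inv\<^bsub>A\<^esub> x else inv\<^bsub>B\<^esub> x)"

lemma letinv_one[simp]: "letinv \<one>\<^bsub>A\<^esub> = \<one>\<^bsub>A\<^esub>"
  by (simp add: letinv_def)

lemma letinv_A: "x \<in> carrier A \<Longrightarrow> letinv x = inv\<^bsub>A\<^esub> x"
  by (simp add: letinv_def)

lemma letinv_B: "x \<in> carrier B \<Longrightarrow> letinv x = inv\<^bsub>B\<^esub> x"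
proof (cases "x \<in> carrier A")
  case True
  assume "x \<in> carrier B"
  then have "x = \<one>\<^bsub>A\<^esub>" using True AB1 by blast
  then show ?thesis using one_eq B.inv_one by (simp add: letinv_def)
qed (simp add: letinv_def)

lemma letter_A:
  assumes "x \<in> carrier A" "x \<noteq> \<one>\<^bsub>A\<^esub>"
  shows "inv\<^bsub>A\<^esub> x \<in> carrier A" "inv\<^bsub>A\<^esub> x \<noteq> \<one>\<^bsub>A\<^esub>" "inv\<^bsub>A\<^esub> x \<notin> carrier B" "x \<notin> carrier B"
proof -
  show 1: "inv\<^bsub>A\<^esub> x \<in> carrier A" using assms by simp
  show 2: "inv\<^bsub>A\<^esub> x \<noteq> \<one>\<^bsub>A\<^esub>" using assms by (metis A.inv_inv A.inv_one)
  show "inv\<^bsub>A\<^esub> x \<notin> carrier B" using 1 2 AB1 by blast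
  show "x \<notin> carrier B" using assms AB1 by blast
qed

lemma letter_B:
  assumes "x \<in> carrier B" "x \<noteq> \<one>\<^bsub>A\<^esub>"
  shows "inv\<^bsub>B\<^esub> x \<in> carrier B" "inv\<^bsub>B\<^esub> x \<noteq> \<one>\<^bsub>A\<^esub>" "inv\<^bsub>B\<^esub> x \<notin> carrier A" "x \<notin> carrier A"
proof -
  show 1: "inv\<^bsub>B\<^esub> x \<in> carrier B" using assms by simp
  show 2: "inv\<^bsub>B\<^esub> x \<noteq> \<one>\<^bsub>A\<^esub>" using assms one_eq by (metis B.inv_inv B.inv_one)
  show "inv\<^bsub>B\<^esub> x \<notin> carrier A" using 1 2 AB1 by blast
  show "x \<notin> carrier A" using assms AB1 by blast
qed

lemma letinv_letter: "x \<in> carrier A \<union> carrier B - {\<one>\<^bsub>A\<^esub>} \<Longrightarrow>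
   letinv x \<in> carrier A \<union> carrier B - {\<one>\<^bsub>A\<^esub>} \<and> (letinv x \<in> carrier A \<longleftrightarrow> x \<in> carrier A)
   \<and> (letinv x \<in> carrier B \<longleftrightarrow> x \<in> carrier B) \<and> letinv (letinv x) = x"
  using letter_A[of x] letter_B[of x] letinv_A letinv_B by auto

lemma cancel1:
  assumes x: "x \<in> carrier A \<union> carrier B" and m: "reduced_word A B m"
  shows "fp_cons A B (letinv x) (fp_cons A B x m) = m"
proof (cases "x = \<one>\<^bsub>A\<^esub>")
  case True thus ?thesis by (simp add: fp_cons_def)
next
  case x1: False
  show ?thesis
  proof (cases m)
    case m0: Nil
    have e1: "fp_cons A B x [] = [x]" using x1 by (simp add: fp_cons_def)
    show ?thesis
    proof (cases "x \<in> carrier A")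
      case True
      note L = letter_A[OF True x1]
      show ?thesis using m0 e1 True L letinv_A[OF True] by (simp add: fp_cons_def)
    next
      case False
      hence xB: "x \<in> carrier B" using x by blast
      note L = letter_B[OF xB x1]
      show ?thesis using m0 e1 False xB L letinv_B[OF xB] one_eq by (simp add: fp_cons_def)
    qed
  next
    case (Cons y m')
    have y: "y \<in> (carrier A \<union> carrier B) - {\<one>\<^bsub>A\<^esub>}" and m': "reduced_word A B m'"
      and ym': "m' = [] \<or> \<not> same_factor A B y (hd m')"
      using m Cons by (auto simp: reduced_Cons)
    have hm': "m' \<noteq> [] \<Longrightarrow> hd m' \<in> (carrier A \<union> carrier B) - {\<one>\<^bsub>A\<^esub>}"
      using m' by (cases m') (auto simp: reduced_Cons)
    have m'c: "fp_cons A B c m' = c # m'" if "c \<in> carrier A \<union> carrier B - {\<one>\<^bsub>A\<^esub>}"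
      "c \<in> carrier A \<longleftrightarrow> y \<in> carrier A" for c
    proof (cases m')
      case Nil thus ?thesis using that by (simp add: fp_cons_def)
    next
      case (Cons y' m'')
      have cB: "c \<in> carrier B \<longleftrightarrow> y \<in> carrier B" using that y AB1 by blast
      have "\<not> same_factor A B y y'" using ym' Cons by simp
      hence "\<not> (c \<in> carrier A \<and> y' \<in> carrier A)" "\<not> (c \<in> carrier B \<and> y' \<in> carrier B)"
        using that(2) cB by (auto simp: same_factor_def)
      thus ?thesis using Cons that(1) by (auto simp: fp_cons_def)
    qed
    show ?thesis
    proof (cases "x \<in> carrier A")
      case xA: True
      note L = letter_A[OF xA x1]
      have li: "letinv x = inv\<^bsub>A\<^esub> x" using letinv_A xA by simp
      show ?thesis
      proof (cases "y \<in> carrier A")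
        case yA: True
        show ?thesis
        proof (cases "x \<otimes>\<^bsub>A\<^esub> y = \<one>\<^bsub>A\<^esub>")
          case True
          have "y = inv\<^bsub>A\<^esub> x" using True xA yA by (metis A.inv_comm A.inv_equality)
          hence yi: "y = inv\<^bsub>A\<^esub> x" .
          have "fp_cons A B x m = m'" using x1 xA yA True Cons by (simp add: fp_cons_def)
          moreover have "fp_cons A B (inv\<^bsub>A\<^esub> x) m' = inv\<^bsub>A\<^esub> x # m'"
            using m'c[of "inv\<^bsub>A\<^esub> x"] L yA by blast
          ultimately show ?thesis using li yi Cons by simp
        next
          case False
          have "inv\<^bsub>A\<^esub> x \<otimes>\<^bsub>A\<^esub> (x \<otimes>\<^bsub>A\<^esub> y) = y" using xA yA
            by (simp add: A.m_assoc[symmetric])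
          hence e: "inv\<^bsub>A\<^esub> x \<otimes>\<^bsub>A\<^esub> (x \<otimes>\<^bsub>A\<^esub> y) = y" .
          have "fp_cons A B x m = (x \<otimes>\<^bsub>A\<^esub> y) # m'" using x1 xA yA False Cons by (simp add: fp_cons_def)
          moreover have "x \<otimes>\<^bsub>A\<^esub> y \<in> carrier A" using xA yA by simp
          ultimately show ?thesis using li e L y Cons by (simp add: fp_cons_def)
        qed
      next
        case False
        hence "fp_cons A B x m = x # m" using x1 xA L Cons by (simp add: fp_cons_def)
        then show ?thesis using li L xA by (simp add: fp_cons_def)
      qed
    next
      case xB0: False
      have xB: "x \<in> carrier B" using x xB0 by auto
      note L = letter_B[OF xB x1]
      have li: "letinv x = inv\<^bsub>B\<^esub> x" using letinv_B xB by simp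
      show ?thesis
      proof (cases "y \<in> carrier B")
        case yB: True
        show ?thesis
        proof (cases "x \<otimes>\<^bsub>B\<^esub> y = \<one>\<^bsub>B\<^esub>")
          case True
          have "y = inv\<^bsub>B\<^esub> x" using True xB yB by (metis B.inv_comm B.inv_equality)
          hence yi: "y = inv\<^bsub>B\<^esub> x" .
          have "fp_cons A B x m = m'" using x1 xB yB True Cons xB0 one_eq by (simp add: fp_cons_def)
          moreover have "fp_cons A B (inv\<^bsub>B\<^esub> x) m' = inv\<^bsub>B\<^esub> x # m'"
            using m'c[of "inv\<^bsub>B\<^esub> x"] L yB y letter_B[of y] by blast
          ultimately show ?thesis using li yi Cons by simp
        next
          case False
          have "inv\<^bsub>B\<^esub> x \<otimes>\<^bsub>B\<^esub> (x \<otimes>\<^bsub>B\<^esub> y) = y" using xB yB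
            by (simp add: B.m_assoc[symmetric])
          hence e: "inv\<^bsub>B\<^esub> x \<otimes>\<^bsub>B\<^esub> (x \<otimes>\<^bsub>B\<^esub> y) = y" .
          have "fp_cons A B x m = (x \<otimes>\<^bsub>B\<^esub> y) # m'" using x1 xB yB False Cons xB0 one_eq by (simp add: fp_cons_def)
          moreover have "x \<otimes>\<^bsub>B\<^esub> y \<in> carrier B" using xB yB by simp
          ultimately show ?thesis using li e L y Cons one_eq by (simp add: fp_cons_def)
        qed
      next
        case False
        hence "fp_cons A B x m = x # m" using x1 xB xB0 L Cons by (simp add: fp_cons_def)
        then show ?thesis using li L xB one_eq by (simp add: fp_cons_def)
      qed
    qed
  qed
qed


definition winv :: "'a list \<Rightarrow> 'a list" where
  "winv w = rev (map letinv w)"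

lemma foldr_Nil: "reduced_word A B u \<Longrightarrow> foldr (fp_cons A B) u [] = u"
proof (induction u)
  case Nil thus ?case by simp
next
  case (Cons x u)
  have u: "reduced_word A B u" and x: "x \<in> carrier A \<union> carrier B - {\<one>\<^bsub>A\<^esub>}"
    and xu: "u = [] \<or> \<not> same_factor A B x (hd u)"
    using Cons.prems by (auto simp: reduced_Cons)
  have "fp_cons A B x u = x # u"
  proof (cases u)
    case Nil thus ?thesis using x by (simp add: fp_cons_def)
  next
    case (Cons y u') thus ?thesis using x xu by (auto simp: fp_cons_def same_factor_def)
  qed
  thus ?case using Cons.IH u by simp
qed

lemma winv_reduced: "reduced_word A B w \<Longrightarrow> reduced_word A B (winv w)"
proof -
  assume w: "reduced_word A B w"
  have S: "set w \<subseteq> carrier A \<union> carrier B - {\<one>\<^bsub>A\<^esub>}" using w by (simp add: reduced_word_def)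
  have "set (winv w) \<subseteq> carrier A \<union> carrier B - {\<one>\<^bsub>A\<^esub>}"
    using S letinv_letter by (auto simp: winv_def)
  moreover have "successively (\<lambda>x y. \<not> same_factor A B x y) (winv w)"
    unfolding winv_def successively_rev successively_map
    apply (rule successively_mono[of "\<lambda>x y. \<not> same_factor A B x y"])
    using w apply (simp add: reduced_word_def)
    using S letinv_letter by (auto simp: same_factor_def)
  ultimately show ?thesis by (simp add: reduced_word_def)
qed

lemma winv_winv: "reduced_word A B w \<Longrightarrow> winv (winv w) = w"
proof -
  assume w: "reduced_word A B w"
  have S: "set w \<subseteq> carrier A \<union> carrier B - {\<one>\<^bsub>A\<^esub>}" using w by (simp add: reduced_word_def)
  have "map letinv (map letinv w) = w"
    using S letinv_letter by (induction w) auto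
  thus ?thesis by (simp add: winv_def rev_map)
qed

lemma cancel:
  "set w \<subseteq> carrier A \<union> carrier B \<Longrightarrow> reduced_word A B m \<Longrightarrow>
   foldr (fp_cons A B) (winv w) (foldr (fp_cons A B) w m) = m"
proof (induction w)
  case Nil thus ?case by (simp add: winv_def)
next
  case (Cons x w)
  have r: "reduced_word A B (foldr (fp_cons A B) w m)" using Cons.prems foldr_reduced by simp
  have "foldr (fp_cons A B) (winv (x # w)) (foldr (fp_cons A B) (x # w) m)
     = foldr (fp_cons A B) (winv w) (fp_cons A B (letinv x) (fp_cons A B x (foldr (fp_cons A B) w m)))"
    by (simp add: winv_def)
  also have "\<dots> = foldr (fp_cons A B) (winv w) (foldr (fp_cons A B) w m)"
    using cancel1 r Cons.prems by simp
  finally show ?case using Cons by simp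
qed

lemma fp_inv: assumes w: "reduced_word A B w"
  shows "inv\<^bsub>free_product A B\<^esub> w = winv w"
proof -
  let ?G = "free_product A B"
  have wi: "reduced_word A B (winv w)" using winv_reduced w .
  have c1: "winv w \<otimes>\<^bsub>?G\<^esub> w = []"
    using cancel[of w "[]"] w reduced_set foldr_Nil by (simp add: free_product_def)
  have c2: "w \<otimes>\<^bsub>?G\<^esub> winv w = []"
    using cancel[of "winv w" "[]"] wi reduced_set foldr_Nil winv_winv[OF w] by (simp add: free_product_def)
  have u: "y = winv w" if "reduced_word A B y" "w \<otimes>\<^bsub>?G\<^esub> y = []" for y
  proof -
    have "foldr (fp_cons A B) (winv w) (foldr (fp_cons A B) w y) = y"
      using cancel[of w y] w that(1) reduced_set by simp
    moreover have "foldr (fp_cons A B) w y = []" using that(2) by (simp add: free_product_def)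
    ultimately show ?thesis using foldr_Nil[OF wi] by simp
  qed
  show ?thesis unfolding m_inv_def
    apply (rule the_equality)
    using wi c1 c2 apply (simp add: free_product_def)
    using u by (simp add: free_product_def)
qed

end

fun stages :: "'a monoid \<Rightarrow> 'a monoid \<Rightarrow> 'a list \<Rightarrow> 'a list \<Rightarrow> 'a list list" where
  "stages A B [] v = [v]"
| "stages A B (x # u) v = foldr (fp_cons A B) (x # u) v # stages A B u v"

lemma foldr_in_stages: "foldr (fp_cons A B) u v \<in> set (stages A B u v)"
  by (cases u) auto

fun tneed :: "'a monoid \<Rightarrow> 'a monoid \<Rightarrow> (nat \<Rightarrow> 'a list) \<Rightarrow> gterm \<Rightarrow> 'a set" where
  "tneed A B \<rho> (GVar n) = set (\<rho> n)"
| "tneed A B \<rho> GOne = {}"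
| "tneed A B \<rho> (GMul s t) = tneed A B \<rho> s \<union> tneed A B \<rho> t \<union>
     \<Union> (set ` set (stages A B (geval (free_product A B) \<rho> s) (geval (free_product A B) \<rho> t)))"
| "tneed A B \<rho> (GInv t) = tneed A B \<rho> t \<union> set (map (fp2.letinv A B) (geval (free_product A B) \<rho> t))"

fun fneed :: "'a monoid \<Rightarrow> 'a monoid \<Rightarrow> (nat \<Rightarrow> 'a list) \<Rightarrow> gqf \<Rightarrow> 'a set" where
  "fneed A B \<rho> (GEq s t) = tneed A B \<rho> s \<union> tneed A B \<rho> t"
| "fneed A B \<rho> (GNeg \<phi>) = fneed A B \<rho> \<phi>"
| "fneed A B \<rho> (GConj \<phi> \<psi>) = fneed A B \<rho> \<phi> \<union> fneed A B \<rho> \<psi>"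
| "fneed A B \<rho> (GDisj \<phi> \<psi>) = fneed A B \<rho> \<phi> \<union> fneed A B \<rho> \<psi>"

lemma tneed_finite: "finite (tneed A B \<rho> t)"
  by (induction t) auto

lemma fneed_finite: "finite (fneed A B \<rho> \<phi>)"
  by (induction \<phi>) (auto simp: tneed_finite)

context fp2 begin

lemma geval_reduced: "(\<forall>n. reduced_word A B (\<rho> n)) \<Longrightarrow> reduced_word A B (geval (free_product A B) \<rho> t)"
proof (induction t)
  case (GMul s t) thus ?case using mult_closed by simp
next
  case (GInv t) thus ?case using fp_inv winv_reduced by simp
qed (auto simp: free_product_def)

lemma geval_set: "(\<forall>n. reduced_word A B (\<rho> n)) \<Longrightarrow> set (geval (free_product A B) \<rho> t) \<subseteq> tneed A B \<rho> t"
proof (induction t)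
  case (GMul s t)
  thus ?case using foldr_in_stages[of A B] by (auto simp: free_product_def)
next
  case (GInv t)
  thus ?case using fp_inv geval_reduced by (auto simp: winv_def)
qed (auto simp: free_product_def)

lemma stages_reduced: "set u \<subseteq> carrier A \<union> carrier B \<Longrightarrow> reduced_word A B v \<Longrightarrow>
    s \<in> set (stages A B u v) \<Longrightarrow> reduced_word A B s"
  by (induction u) (auto intro: foldr_reduced fp_cons_reduced)

lemma tneed_sub: "(\<forall>n. reduced_word A B (\<rho> n)) \<Longrightarrow> tneed A B \<rho> t \<subseteq> carrier A \<union> carrier B"
proof (induction t)
  case (GVar n) thus ?case using reduced_set by simp
next
  case GOne thus ?case by simp
next
  case (GMul s t)
  have "reduced_word A B x" if "x \<in> set (stages A B (geval (free_product A B) \<rho> s) (geval (free_product A B) \<rho> t))" for x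
    using stages_reduced[OF _ _ that] geval_reduced reduced_set GMul.prems by blast
  thus ?case using GMul reduced_set by fastforce
next
  case (GInv t)
  have "reduced_word A B (geval (free_product A B) \<rho> t)" using geval_reduced GInv.prems by blast
  hence "set (geval (free_product A B) \<rho> t) \<subseteq> carrier A \<union> carrier B - {\<one>\<^bsub>A\<^esub>}"
    by (simp add: reduced_word_def)
  hence "set (map letinv (geval (free_product A B) \<rho> t)) \<subseteq> carrier A \<union> carrier B"
    using letinv_letter by auto
  thus ?case using GInv by simp
qed

lemma fneed_sub: "(\<forall>n. reduced_word A B (\<rho> n)) \<Longrightarrow> fneed A B \<rho> \<phi> \<subseteq> carrier A \<union> carrier B"
  by (induction \<phi>) (auto dest: tneed_sub)

end

locale trans2 = P1: fp2 A1 B1 + P2: fp2 A2 B2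
  for A1 B1 :: "'a monoid" and A2 B2 :: "'b monoid" +
  fixes h :: "'a \<Rightarrow> 'b" and D :: "'a set"
  assumes D_sub: "D \<subseteq> carrier A1 \<union> carrier B1"
    and one_D: "\<one>\<^bsub>A1\<^esub> \<in> D"
    and h_one: "h \<one>\<^bsub>A1\<^esub> = \<one>\<^bsub>A2\<^esub>"
    and h_inj: "inj_on h D"
    and hA: "x \<in> D \<Longrightarrow> h x \<in> carrier A2 \<longleftrightarrow> x \<in> carrier A1"
    and hB: "x \<in> D \<Longrightarrow> h x \<in> carrier B2 \<longleftrightarrow> x \<in> carrier B1"
    and mulA: "\<lbrakk>x \<in> D; y \<in> D; x \<in> carrier A1; y \<in> carrier A1; x \<otimes>\<^bsub>A1\<^esub> y \<in> D\<rbrakk>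
       \<Longrightarrow> h (x \<otimes>\<^bsub>A1\<^esub> y) = h x \<otimes>\<^bsub>A2\<^esub> h y"
    and mulB: "\<lbrakk>x \<in> D; y \<in> D; x \<in> carrier B1; y \<in> carrier B1; x \<otimes>\<^bsub>B1\<^esub> y \<in> D\<rbrakk>
       \<Longrightarrow> h (x \<otimes>\<^bsub>B1\<^esub> y) = h x \<otimes>\<^bsub>B2\<^esub> h y"
    and invA: "\<lbrakk>x \<in> D; x \<in> carrier A1; inv\<^bsub>A1\<^esub> x \<in> D\<rbrakk> \<Longrightarrow> h (inv\<^bsub>A1\<^esub> x) = inv\<^bsub>A2\<^esub> (h x)"
    and invB: "\<lbrakk>x \<in> D; x \<in> carrier B1; inv\<^bsub>B1\<^esub> x \<in> D\<rbrakk> \<Longrightarrow> h (inv\<^bsub>B1\<^esub> x) = inv\<^bsub>B2\<^esub> (h x)"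
begin

lemma h_is_one: "x \<in> D \<Longrightarrow> h x = \<one>\<^bsub>A2\<^esub> \<longleftrightarrow> x = \<one>\<^bsub>A1\<^esub>"
  using h_inj one_D h_one by (metis inj_on_def)

lemma h_cons:
  assumes x: "x \<in> D" and w: "set w \<subseteq> D" and c: "set (fp_cons A1 B1 x w) \<subseteq> D"
  shows "map h (fp_cons A1 B1 x w) = fp_cons A2 B2 (h x) (map h w)"
proof (cases "x = \<one>\<^bsub>A1\<^esub>")
  case True thus ?thesis using h_one by (simp add: fp_cons_def)
next
  case x1: False
  have hx1: "h x \<noteq> \<one>\<^bsub>A2\<^esub>" using h_is_one x x1 by simp
  show ?thesis
  proof (cases w)
    case Nil thus ?thesis using x1 hx1 by (simp add: fp_cons_def)
  next
    case (Cons y w')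
    have y: "y \<in> D" using w Cons by simp
    show ?thesis
    proof (cases "x \<in> carrier A1 \<and> y \<in> carrier A1")
      case True
      have T2: "h x \<in> carrier A2 \<and> h y \<in> carrier A2" using True hA x y by simp
      define z where "z = x \<otimes>\<^bsub>A1\<^esub> y"
      have e1: "fp_cons A1 B1 x w = (if z = \<one>\<^bsub>A1\<^esub> then w' else z # w')"
        using x1 True Cons by (simp add: fp_cons_def z_def)
      have zD: "z \<in> D" using c e1 one_D by (cases "z = \<one>\<^bsub>A1\<^esub>") auto
      have hz: "h z = h x \<otimes>\<^bsub>A2\<^esub> h y" using mulA x y True zD by (simp add: z_def)
      have e2: "fp_cons A2 B2 (h x) (map h w) = (if h z = \<one>\<^bsub>A2\<^esub> then map h w' else h z # map h w')"
        using hx1 T2 Cons hz by (simp add: fp_cons_def)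
      show ?thesis using e1 e2 h_is_one[OF zD] by simp
    next
      case nA: False
      have nA2: "\<not> (h x \<in> carrier A2 \<and> h y \<in> carrier A2)" using nA hA x y by simp
      show ?thesis
      proof (cases "x \<in> carrier B1 \<and> y \<in> carrier B1")
        case True
        have T2: "h x \<in> carrier B2 \<and> h y \<in> carrier B2" using True hB x y by simp
        define z where "z = x \<otimes>\<^bsub>B1\<^esub> y"
        have e1: "fp_cons A1 B1 x w = (if z = \<one>\<^bsub>A1\<^esub> then w' else z # w')"
          using x1 True Cons nA P1.one_eq by (auto simp: fp_cons_def z_def)
        have zD: "z \<in> D" using c e1 one_D by (cases "z = \<one>\<^bsub>A1\<^esub>") auto
        have hz: "h z = h x \<otimes>\<^bsub>B2\<^esub> h y" using mulB x y True zD by (simp add: z_def)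
        have e2: "fp_cons A2 B2 (h x) (map h w) = (if h z = \<one>\<^bsub>A2\<^esub> then map h w' else h z # map h w')"
          using hx1 T2 Cons hz nA2 P2.one_eq by (auto simp: fp_cons_def)
        show ?thesis using e1 e2 h_is_one[OF zD] by simp
      next
        case False
        have nB2: "\<not> (h x \<in> carrier B2 \<and> h y \<in> carrier B2)" using False hB x y by simp
        show ?thesis using False nA nA2 nB2 x1 hx1 Cons by (auto simp: fp_cons_def)
      qed
    qed
  qed
qed

lemma h_reduced: "reduced_word A1 B1 w \<Longrightarrow> set w \<subseteq> D \<Longrightarrow> reduced_word A2 B2 (map h w)"
proof -
  assume w: "reduced_word A1 B1 w" and S: "set w \<subseteq> D"
  have L: "set w \<subseteq> carrier A1 \<union> carrier B1 - {\<one>\<^bsub>A1\<^esub>}" using w by (simp add: reduced_word_def)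
  have "set (map h w) \<subseteq> carrier A2 \<union> carrier B2 - {\<one>\<^bsub>A2\<^esub>}"
  proof
    fix b assume "b \<in> set (map h w)"
    then obtain x where x: "x \<in> set w" "b = h x" by auto
    thus "b \<in> carrier A2 \<union> carrier B2 - {\<one>\<^bsub>A2\<^esub>}"
      using L S hA[of x] hB[of x] h_is_one[of x] by auto
  qed
  moreover have "successively (\<lambda>x y. \<not> same_factor A2 B2 x y) (map h w)"
    unfolding successively_map
    apply (rule successively_mono[of "\<lambda>x y. \<not> same_factor A1 B1 x y"])
    using w apply (simp add: reduced_word_def)
    using S hA hB by (auto simp: same_factor_def)
  ultimately show ?thesis by (simp add: reduced_word_def)
qed

lemma h_foldr:
  "set u \<subseteq> D \<Longrightarrow> (\<forall>s\<in>set (stages A1 B1 u v). set s \<subseteq> D) \<Longrightarrow>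
   map h (foldr (fp_cons A1 B1) u v) = foldr (fp_cons A2 B2) (map h u) (map h v)"
proof (induction u)
  case Nil thus ?case by simp
next
  case (Cons x u)
  have st: "\<forall>s\<in>set (stages A1 B1 u v). set s \<subseteq> D" using Cons.prems by (cases u) auto
  have r: "set (foldr (fp_cons A1 B1) u v) \<subseteq> D" using st foldr_in_stages by blast
  have c: "set (fp_cons A1 B1 x (foldr (fp_cons A1 B1) u v)) \<subseteq> D" using Cons.prems by simp
  show ?case using h_cons[OF _ r c] Cons.prems Cons.IH[OF _ st] by simp
qed

lemma h_letinv: "x \<in> D \<Longrightarrow> P1.letinv x \<in> D \<Longrightarrow> h (P1.letinv x) = P2.letinv (h x)"
proof -
  assume x: "x \<in> D" and lx: "P1.letinv x \<in> D"
  show ?thesis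
  proof (cases "x \<in> carrier A1")
    case True
    thus ?thesis using invA x lx P1.letinv_A P2.letinv_A hA by simp
  next
    case False
    hence xB: "x \<in> carrier B1" using x D_sub by blast
    thus ?thesis using invB x lx P1.letinv_B P2.letinv_B hB by simp
  qed
qed

lemma h_winv: "set w \<subseteq> D \<Longrightarrow> set (map P1.letinv w) \<subseteq> D \<Longrightarrow> map h (P1.winv w) = P2.winv (map h w)"
  unfolding P1.winv_def P2.winv_def
  by (induction w) (auto simp: h_letinv)


definition rho2 :: "(nat \<Rightarrow> 'a list) \<Rightarrow> nat \<Rightarrow> 'b list" where
  "rho2 \<rho> n = (if set (\<rho> n) \<subseteq> D then map h (\<rho> n) else [])"

lemma rho2_reduced: "\<forall>n. reduced_word A1 B1 (\<rho> n) \<Longrightarrow> reduced_word A2 B2 (rho2 \<rho> n)"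
  by (simp add: rho2_def h_reduced)

lemma h_geval:
  "\<forall>n. reduced_word A1 B1 (\<rho> n) \<Longrightarrow> tneed A1 B1 \<rho> t \<subseteq> D \<Longrightarrow>
   geval (free_product A2 B2) (rho2 \<rho>) t = map h (geval (free_product A1 B1) \<rho> t)"
proof (induction t)
  case (GVar n) thus ?case by (simp add: rho2_def)
next
  case GOne thus ?case by (simp add: free_product_def)
next
  case (GMul s t)
  have us: "set (geval (free_product A1 B1) \<rho> s) \<subseteq> D" using P1.geval_set GMul.prems by fastforce
  have st: "\<forall>x\<in>set (stages A1 B1 (geval (free_product A1 B1) \<rho> s) (geval (free_product A1 B1) \<rho> t)). set x \<subseteq> D"
    using GMul.prems by auto
  show ?case using GMul h_foldr[OF us st] by (auto simp: free_product_def)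
next
  case (GInv t)
  have r1: "reduced_word A1 B1 (geval (free_product A1 B1) \<rho> t)" using P1.geval_reduced GInv.prems by blast
  have us: "set (geval (free_product A1 B1) \<rho> t) \<subseteq> D" using P1.geval_set GInv.prems by fastforce
  have r2: "reduced_word A2 B2 (map h (geval (free_product A1 B1) \<rho> t))" using h_reduced r1 us by blast
  have li: "set (map P1.letinv (geval (free_product A1 B1) \<rho> t)) \<subseteq> D" using GInv.prems by simp
  show ?case using GInv P2.fp_inv[OF r2] P1.fp_inv[OF r1] h_winv[OF us li] by simp
qed

lemma h_gsat:
  "\<forall>n. reduced_word A1 B1 (\<rho> n) \<Longrightarrow> fneed A1 B1 \<rho> \<phi> \<subseteq> D \<Longrightarrow>
   gsat (free_product A2 B2) (rho2 \<rho>) \<phi> \<longleftrightarrow> gsat (free_product A1 B1) \<rho> \<phi>"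
proof (induction \<phi>)
  case (GEq s t)
  have s: "set (geval (free_product A1 B1) \<rho> s) \<subseteq> D" using P1.geval_set GEq.prems by fastforce
  have t: "set (geval (free_product A1 B1) \<rho> t) \<subseteq> D" using P1.geval_set GEq.prems by fastforce
  have inj: "inj_on h (set (geval (free_product A1 B1) \<rho> s) \<union> set (geval (free_product A1 B1) \<rho> t))"
    using inj_on_subset[OF h_inj] s t by (metis Un_subset_iff)
  have e1: "geval (free_product A2 B2) (rho2 \<rho>) s = map h (geval (free_product A1 B1) \<rho> s)"
    using h_geval GEq.prems by simp
  have e2: "geval (free_product A2 B2) (rho2 \<rho>) t = map h (geval (free_product A1 B1) \<rho> t)"
    using h_geval GEq.prems by simp
  show ?case using e1 e2 inj_on_map_eq_map[OF inj] by simp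
next
  case (GNeg \<phi>) thus ?case by simp
next
  case (GConj \<phi> \<psi>) thus ?case by simp
next
  case (GDisj \<phi> \<psi>) thus ?case by simp
qed

end


lemma one_dir:
  fixes A1 B1 :: "'a monoid" and A2 B2 :: "'b monoid"
  assumes F1: "fp2 A1 B1" and F2: "fp2 A2 B2"
    and fA: "\<forall>S. S \<subseteq> carrier A1 \<and> finite S \<longrightarrow> (\<exists>T f. partial_iso A1 A2 S T f)"
    and fB: "\<forall>S. S \<subseteq> carrier B1 \<and> finite S \<longrightarrow> (\<exists>T f. partial_iso B1 B2 S T f)"
    and ex: "ex_holds (free_product A1 B1) \<phi>"
  shows "ex_holds (free_product A2 B2) \<phi>"
proof -
  interpret P1: fp2 A1 B1 by (rule F1)
  interpret P2: fp2 A2 B2 by (rule F2)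
  obtain \<rho> where \<rho>: "\<forall>n. reduced_word A1 B1 (\<rho> n)" and sat: "gsat (free_product A1 B1) \<rho> \<phi>"
    using ex by (auto simp: ex_holds_def free_product_def)
  define D where "D = insert \<one>\<^bsub>A1\<^esub> (fneed A1 B1 \<rho> \<phi>)"
  have Dfin: "finite D" by (simp add: D_def fneed_finite)
  have Dsub: "D \<subseteq> carrier A1 \<union> carrier B1" using P1.fneed_sub[OF \<rho>] by (simp add: D_def)
  obtain TA fa where pa: "partial_iso A1 A2 (D \<inter> carrier A1) TA fa" using fA Dfin by blast
  obtain TB fb where pb: "partial_iso B1 B2 (D \<inter> carrier B1) TB fb" using fB Dfin by blast
  have one1: "\<one>\<^bsub>A1\<^esub> \<in> D" by (simp add: D_def)
  have oneA: "\<one>\<^bsub>A1\<^esub> \<in> carrier A1" by simp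
  have oneB: "\<one>\<^bsub>B1\<^esub> \<in> carrier B1" by simp
  have injA: "inj_on fa (D \<inter> carrier A1)" and imA: "fa ` (D \<inter> carrier A1) \<subseteq> carrier A2"
    and prA: "preserves_on A1 A2 (D \<inter> carrier A1) fa"
    using pa by (auto simp: partial_iso_def bij_betw_def)
  have injB: "inj_on fb (D \<inter> carrier B1)" and imB: "fb ` (D \<inter> carrier B1) \<subseteq> carrier B2"
    and prB: "preserves_on B1 B2 (D \<inter> carrier B1) fb"
    using pb by (auto simp: partial_iso_def bij_betw_def)
  have fa1: "fa \<one>\<^bsub>A1\<^esub> = \<one>\<^bsub>A2\<^esub>" using prA one1 oneA by (simp add: preserves_on_def)
  have fb1: "fb \<one>\<^bsub>A1\<^esub> = \<one>\<^bsub>A2\<^esub>" using prB one1 oneB P1.one_eq P2.one_eq by (simp add: preserves_on_def)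
  define h where "h x = (if x \<in> carrier A1 then fa x else fb x)" for x
  have hxA: "h x = fa x" if "x \<in> carrier A1" for x using that by (simp add: h_def)
  have hxB: "h x = fb x" if "x \<in> D" "x \<in> carrier B1" for x
  proof (cases "x \<in> carrier A1")
    case True
    hence "x = \<one>\<^bsub>A1\<^esub>" using that P1.AB1 by blast
    thus ?thesis using fa1 fb1 by (simp add: h_def)
  qed (simp add: h_def)
  have faA2: "fa x \<in> carrier A2" if "x \<in> D" "x \<in> carrier A1" for x using imA that by blast
  have fbB2: "fb x \<in> carrier B2" if "x \<in> D" "x \<in> carrier B1" for x using imB that by blast
  have fa_is1: "fa x = \<one>\<^bsub>A2\<^esub> \<Longrightarrow> x = \<one>\<^bsub>A1\<^esub>" if "x \<in> D" "x \<in> carrier A1" for x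
    using injA that one1 oneA fa1 by (metis IntI inj_onD)
  have fb_is1: "fb x = \<one>\<^bsub>A2\<^esub> \<Longrightarrow> x = \<one>\<^bsub>A1\<^esub>" if "x \<in> D" "x \<in> carrier B1" for x
    using injB that one1 oneB fb1 P1.one_eq by (metis IntI inj_onD)
  have T: "trans2 A1 B1 A2 B2 h D"
  proof (unfold_locales)
    show "D \<subseteq> carrier A1 \<union> carrier B1" by (rule Dsub)
    show "\<one>\<^bsub>A1\<^esub> \<in> D" by (rule one1)
    show "h \<one>\<^bsub>A1\<^esub> = \<one>\<^bsub>A2\<^esub>" using hxA fa1 by simp
    show "inj_on h D"
    proof (rule inj_onI)
      fix x y assume x: "x \<in> D" and y: "y \<in> D" and e: "h x = h y"
      show "x = y"
      proof (cases "x \<in> carrier A1")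
        case xA: True
        show ?thesis
        proof (cases "y \<in> carrier A1")
          case True thus ?thesis using xA x y e hxA injA by (simp add: inj_on_def)
        next
          case False
          hence yB: "y \<in> carrier B1" using y Dsub by blast
          have "fa x = fb y" using e hxA xA hxB y yB by simp
          hence "fa x = \<one>\<^bsub>A2\<^esub>" using faA2[OF x xA] fbB2[OF y yB] P2.AB1 by metis
          thus ?thesis using fa_is1 fb_is1 x xA y yB \<open>fa x = fb y\<close> by metis
        qed
      next
        case xA: False
        hence xB: "x \<in> carrier B1" using x Dsub by blast
        show ?thesis
        proof (cases "y \<in> carrier A1")
          case yA: True
          have "fb x = fa y" using e hxA yA hxB x xB by simp
          hence "fa y = \<one>\<^bsub>A2\<^esub>" using faA2[OF y yA] fbB2[OF x xB] P2.AB1 by metis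
          thus ?thesis using fa_is1 fb_is1 x xB y yA \<open>fb x = fa y\<close> by metis
        next
          case False
          hence yB: "y \<in> carrier B1" using y Dsub by blast
          thus ?thesis using xB x y e hxB injB by (simp add: inj_on_def)
        qed
      qed
    qed
    show "h x \<in> carrier A2 \<longleftrightarrow> x \<in> carrier A1" if x: "x \<in> D" for x
    proof
      assume "x \<in> carrier A1" thus "h x \<in> carrier A2" using hxA faA2 x by simp
    next
      assume h2: "h x \<in> carrier A2"
      show "x \<in> carrier A1"
      proof (rule ccontr)
        assume nA: "x \<notin> carrier A1"
        hence xB: "x \<in> carrier B1" using x Dsub by blast
        have "fb x = \<one>\<^bsub>A2\<^esub>" using h2 hxB[OF x xB] fbB2[OF x xB] P2.AB1 by metis
        hence "x = \<one>\<^bsub>A1\<^esub>" using fb_is1 x xB by blast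
        thus False using nA by simp
      qed
    qed
    show "h x \<in> carrier B2 \<longleftrightarrow> x \<in> carrier B1" if x: "x \<in> D" for x
    proof
      assume "x \<in> carrier B1" thus "h x \<in> carrier B2" using hxB fbB2 x by simp
    next
      assume h2: "h x \<in> carrier B2"
      show "x \<in> carrier B1"
      proof (rule ccontr)
        assume nB: "x \<notin> carrier B1"
        hence xA: "x \<in> carrier A1" using x Dsub by blast
        have "fa x = \<one>\<^bsub>A2\<^esub>" using h2 hxA[OF xA] faA2[OF x xA] P2.AB1 by metis
        hence "x = \<one>\<^bsub>A1\<^esub>" using fa_is1 x xA by blast
        thus False using nB P1.one_eq oneB by metis
      qed
    qed
    show "h (x \<otimes>\<^bsub>A1\<^esub> y) = h x \<otimes>\<^bsub>A2\<^esub> h y"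
      if "x \<in> D" "y \<in> D" "x \<in> carrier A1" "y \<in> carrier A1" "x \<otimes>\<^bsub>A1\<^esub> y \<in> D" for x y
      using that prA hxA by (simp add: preserves_on_def)
    show "h (x \<otimes>\<^bsub>B1\<^esub> y) = h x \<otimes>\<^bsub>B2\<^esub> h y"
      if "x \<in> D" "y \<in> D" "x \<in> carrier B1" "y \<in> carrier B1" "x \<otimes>\<^bsub>B1\<^esub> y \<in> D" for x y
      using that prB hxB by (simp add: preserves_on_def)
    show "h (inv\<^bsub>A1\<^esub> x) = inv\<^bsub>A2\<^esub> (h x)"
      if "x \<in> D" "x \<in> carrier A1" "inv\<^bsub>A1\<^esub> x \<in> D" for x
      using that prA hxA by (simp add: preserves_on_def)
    show "h (inv\<^bsub>B1\<^esub> x) = inv\<^bsub>B2\<^esub> (h x)"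
      if "x \<in> D" "x \<in> carrier B1" "inv\<^bsub>B1\<^esub> x \<in> D" for x
      using that prB hxB by (simp add: preserves_on_def)
  qed
  interpret T: trans2 A1 B1 A2 B2 h D by (rule T)
  have "gsat (free_product A2 B2) (T.rho2 \<rho>) \<phi>"
    using T.h_gsat[OF \<rho>, of \<phi>] sat by (auto simp: D_def)
  moreover have "\<forall>n. T.rho2 \<rho> n \<in> carrier (free_product A2 B2)"
    using T.rho2_reduced[OF \<rho>] by (simp add: free_product_def)
  ultimately show ?thesis by (auto simp: ex_holds_def)
qed


theorem mainTheorem6:
  fixes A1 B1 :: "'a monoid" and A2 B2 :: "'b monoid"
  assumes "group A1" and "group B1" and "group A2" and "group B2"
    and "\<one>\<^bsub>B1\<^esub> = \<one>\<^bsub>A1\<^esub>" and "carrier A1 \<inter> carrier B1 = {\<one>\<^bsub>A1\<^esub>}"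
    and "\<one>\<^bsub>B2\<^esub> = \<one>\<^bsub>A2\<^esub>" and "carrier A2 \<inter> carrier B2 = {\<one>\<^bsub>A2\<^esub>}"
    and "fin_equiv A1 A2" and "fin_equiv B1 B2"
  shows "existentially_equivalent (free_product A1 B1) (free_product A2 B2)"
proof -
  have F1: "fp2 A1 B1" using assms by (simp add: fp2_def fp2_axioms_def)
  have F2: "fp2 A2 B2" using assms by (simp add: fp2_def fp2_axioms_def)
  show ?thesis unfolding existentially_equivalent_def
  proof
    fix \<phi>
    show "ex_holds (free_product A1 B1) \<phi> = ex_holds (free_product A2 B2) \<phi>"
    proof
      assume "ex_holds (free_product A1 B1) \<phi>"
      thus "ex_holds (free_product A2 B2) \<phi>"
        using one_dir[OF F1 F2] assms(9,10) by (simp add: fin_equiv_def)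
    next
      assume "ex_holds (free_product A2 B2) \<phi>"
      thus "ex_holds (free_product A1 B1) \<phi>"
        using one_dir[OF F2 F1] assms(9,10) by (simp add: fin_equiv_def)
    qed
  qed
qed

end
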